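(* For every policy $i$ and asset level $a>0$, the natural allocation margin $\bar M_i(a):=\bar P_i(a)-\bar S_i(a)$ equals $$\bar M_i(a)=\int_0^a\big(\beta_i(x)\,g(S(x))-\alpha_i(x)\,S(x)\big)\,dx,$$ so the margin density for line $i$ at asset level $a$ is $M_i(a)=\beta_i(a)\,g(S(a))-\alpha_i(a)\,S(a)$.
   Context: Work on an atomless probability space $(\Omega,\mathcal F,\mathsf P)$. A distortion function is an increasing concave function $g:[0,1]\to[0,1]$ with $g(0)=0$ and $g(1)=1$; assume in addition $g$ is continuous at $0$. Its derivative $g'$ exists except at countably many points. For a nonnegative random variable $Y$ with survival function $S_Y(y)=\mathsf P(Y>y)$, the distortion risk measure is $\rho(Y):=\int_0^\infty g(S_Y(y))\,dy$. Let $X_1,\dots,X_n$ be nonnegative integrable random variables and $X=\sum_{i=1}^n X_i$. Assume $X$ has a probability density $f$ and survival function $S(x)=\mathsf P(X>x)$, and $\rho(X)<\infty$. Let $\mathsf Q$ be the probability measure with $d\mathsf Q/d\mathsf P=g'(S(X))$. Equal priority payments: $X_i(a):=X_i\,\frac{X\wedge a}{X}$ ($=X_i$ if $X\le a$, $=X_ia/X$ if $X>a$). Define $\bar S_i(a):=\mathsf E[X_i(a)]$, $\bar P_i(a):=\mathsf E_{\mathsf Q}[X_i(a)]$, and for $x$ with $S(x)>0$, $\alpha_i(x):=\mathsf E[X_i/X\mid X>x]$ and $\beta_i(x):=\mathsf E_{\mathsf Q}[X_i/X\mid X>x]$. *)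

theory Defs
  imports "HOL-Probability.Probability"
begin

definition atomless :: "'a measure \<Rightarrow> bool" where
  "atomless M \<longleftrightarrow> (\<forall>A\<in>sets M. measure M A > 0 \<longrightarrow>
      (\<exists>B\<in>sets M. B \<subseteq> A \<and> 0 < measure M B \<and> measure M B < measure M A))"

definition distortion :: "(real \<Rightarrow> real) \<Rightarrow> bool" where
  "distortion g \<longleftrightarrow> g ` {0..1} \<subseteq> {0..1} \<and> mono_on {0..1} g \<and> concave_on {0..1} g
     \<and> g 0 = 0 \<and> g 1 = 1 \<and> continuous (at 0 within {0..1}) g"

definition Xtot :: "(nat \<Rightarrow> 'a \<Rightarrow> real) \<Rightarrow> nat \<Rightarrow> 'a \<Rightarrow> real" where
  "Xtot Xs n \<omega> = (\<Sum>j=1..n. Xs j \<omega>)"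

definition surv :: "'a measure \<Rightarrow> ('a \<Rightarrow> real) \<Rightarrow> real \<Rightarrow> real" where
  "surv M X x = measure M {\<omega>\<in>space M. X \<omega> > x}"

definition rho :: "'a measure \<Rightarrow> (real \<Rightarrow> real) \<Rightarrow> ('a \<Rightarrow> real) \<Rightarrow> ennreal" where
  "rho M g Y = (\<integral>\<^sup>+ y\<in>{0..}. ennreal (g (surv M Y y)) \<partial>lborel)"

definition Qm :: "'a measure \<Rightarrow> (real \<Rightarrow> real) \<Rightarrow> ('a \<Rightarrow> real) \<Rightarrow> 'a measure" where
  "Qm M gd X = density M (\<lambda>\<omega>. ennreal (gd (surv M X (X \<omega>))))"

definition eqpay :: "(nat \<Rightarrow> 'a \<Rightarrow> real) \<Rightarrow> nat \<Rightarrow> nat \<Rightarrow> real \<Rightarrow> 'a \<Rightarrow> real" where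
  "eqpay Xs n i a \<omega> = Xs i \<omega> * min (Xtot Xs n \<omega>) a / Xtot Xs n \<omega>"

definition Sbar :: "'a measure \<Rightarrow> (nat \<Rightarrow> 'a \<Rightarrow> real) \<Rightarrow> nat \<Rightarrow> nat \<Rightarrow> real \<Rightarrow> real" where
  "Sbar M Xs n i a = (\<integral>\<omega>. eqpay Xs n i a \<omega> \<partial>M)"

definition Pbar :: "'a measure \<Rightarrow> (real \<Rightarrow> real) \<Rightarrow> (nat \<Rightarrow> 'a \<Rightarrow> real) \<Rightarrow> nat \<Rightarrow> nat \<Rightarrow> real \<Rightarrow> real" where
  "Pbar M gd Xs n i a = (\<integral>\<omega>. eqpay Xs n i a \<omega> \<partial>(Qm M gd (Xtot Xs n)))"

definition cond_exp_event :: "'a measure \<Rightarrow> ('a \<Rightarrow> real) \<Rightarrow> 'a set \<Rightarrow> real" where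
  "cond_exp_event M Y A = (\<integral>\<omega>. Y \<omega> * indicator A \<omega> \<partial>M) / measure M A"

definition alpha :: "'a measure \<Rightarrow> (nat \<Rightarrow> 'a \<Rightarrow> real) \<Rightarrow> nat \<Rightarrow> nat \<Rightarrow> real \<Rightarrow> real" where
  "alpha M Xs n i x = cond_exp_event M (\<lambda>\<omega>. Xs i \<omega> / Xtot Xs n \<omega>)
       {\<omega>\<in>space M. Xtot Xs n \<omega> > x}"

definition beta :: "'a measure \<Rightarrow> (real \<Rightarrow> real) \<Rightarrow> (nat \<Rightarrow> 'a \<Rightarrow> real) \<Rightarrow> nat \<Rightarrow> nat \<Rightarrow> real \<Rightarrow> real" where
  "beta M gd Xs n i x = cond_exp_event (Qm M gd (Xtot Xs n)) (\<lambda>\<omega>. Xs i \<omega> / Xtot Xs n \<omega>)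
       {\<omega>\<in>space M. Xtot Xs n \<omega> > x}"

end

theory Submission
  imports Defs
begin

lemma distortion_cont:
  assumes "distortion g" shows "continuous_on {0..1} g"
proof -
  have cc: "concave_on {0..1} g" and mo: "mono_on {0..1} g" and c0: "continuous (at 0 within {0..1}) g"
    using assms by (auto simp: distortion_def)
  have copen: "continuous_on {0<..<1} g"
  proof -
    have "convex_on {0<..<1} (\<lambda>x. - g x)"
      using cc unfolding concave_on_def by (rule convex_on_subset) auto
    then have "continuous_on {0<..<1} (\<lambda>x. - g x)" by (intro convex_on_continuous) auto
    then show ?thesis using continuous_on_minus[of "{0<..<1}" "\<lambda>x. - g x"] by simp
  qed
  have c1: "continuous (at 1 within {0..1}) g"
  proof -
    have "((\<lambda>t. (2*t-1) * g 1 + (2-2*t) * g (1/2)) \<longlongrightarrow> (2*1-1) * g 1 + (2-2*1) * g (1/2)) (at 1 within {0..1})"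
      by (intro tendsto_intros)
    then have L: "((\<lambda>t. (2*t-1) * g 1 + (2-2*t) * g (1/2)) \<longlongrightarrow> g 1) (at 1 within {0..1})" by simp
    have ev: "eventually (\<lambda>t::real. t \<in> {1/2..1}) (at 1 within {0..1})"
    proof -
      have "eventually (\<lambda>t::real. t > 1/2) (at 1 within {0..1})"
        by (intro eventually_at_topological[THEN iffD2] exI[of _ "{(1/2::real)<..}"]) auto
      moreover have "eventually (\<lambda>t::real. t \<in> {0..1}) (at 1 within {0..1})"
        by (simp add: eventually_at_filter)
      ultimately show ?thesis by eventually_elim auto
    qed
    have low: "eventually (\<lambda>t. (2*t-1) * g 1 + (2-2*t) * g (1/2) \<le> g t) (at 1 within {0..1})"
      using ev
    proof eventually_elim
      case (elim t)
      have "(1 - (2*t-1)) * g (1/2) + (2*t-1) * g 1 \<le> g ((1 - (2*t-1)) *\<^sub>R (1/2) + (2*t-1) *\<^sub>R 1)"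
        using elim by (intro concave_onD[OF cc]) auto
      also have "(1 - (2*t-1)) *\<^sub>R (1/2) + (2*t-1) *\<^sub>R (1::real) = t" by (simp add: algebra_simps)
      finally show ?case by (simp add: algebra_simps)
    qed
    have up: "eventually (\<lambda>t. g t \<le> g 1) (at 1 within {0..1})"
      using ev by eventually_elim (auto intro!: mono_onD[OF mo])
    have "(g \<longlongrightarrow> g 1) (at 1 within {0..1})"
      by (rule tendsto_sandwich[OF low up L tendsto_const])
    then show ?thesis by (simp add: continuous_within)
  qed
  show ?thesis unfolding continuous_on_eq_continuous_within
  proof
    fix x :: real assume x: "x \<in> {0..1}"
    show "continuous (at x within {0..1}) g"
    proof (cases "x = 0 \<or> x = 1")
      case True then show ?thesis using c0 c1 by auto
    next
      case False
      then have "x \<in> {0<..<1}" using x by auto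
      then have "isCont g x" using copen by (simp add: continuous_on_eq_continuous_at)
      then show ?thesis by (rule continuous_at_imp_continuous_within)
    qed
  qed
qed

lemma deriv_seq:
  fixes f :: "real \<Rightarrow> real"
  assumes "(f has_real_derivative D) (at x)"
  shows "(\<lambda>k. (f (x + 1 / Suc k) - f x) * Suc k) \<longlonglongrightarrow> D"
proof -
  have L: "((\<lambda>y. (f y - f x) / (y - x)) \<longlongrightarrow> D) (at x)"
    using assms by (simp add: has_field_derivative_iff)
  have s: "(\<lambda>k. x + 1 / real (Suc k)) \<longlonglongrightarrow> x"
    using tendsto_add[OF tendsto_const[of x] LIMSEQ_inverse_real_of_nat] by (simp add: inverse_eq_divide)
  have ne: "\<forall>k. x + 1 / real (Suc k) \<noteq> x" by simp
  have "(\<lambda>k. (\<lambda>y. (f y - f x) / (y - x)) (x + 1 / real (Suc k))) \<longlonglongrightarrow> D"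
    using L[unfolded LIMSEQ_SEQ_conv[symmetric], rule_format, OF conjI[OF ne s]] .
  then show ?thesis by simp
qed

definition clampG :: "(real \<Rightarrow> real) \<Rightarrow> real \<Rightarrow> real" where
  "clampG g u = g (max 0 (min u 1))"

definition gdz :: "(real \<Rightarrow> real) \<Rightarrow> real set \<Rightarrow> real \<Rightarrow> real" where
  "gdz gd C u = (if u \<in> {0<..<1} - C then gd u else 0)"

lemma clampG_cont:
  assumes "distortion g" shows "continuous_on UNIV (clampG g)"
proof -
  have "continuous_on UNIV (\<lambda>u::real. max 0 (min u 1))" by (intro continuous_intros)
  moreover have "(\<lambda>u::real. max 0 (min u 1)) ` UNIV \<subseteq> {0..1}" by auto
  ultimately show ?thesis unfolding clampG_def
    using continuous_on_compose2[OF distortion_cont[OF assms]] by blast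
qed

lemma clampG_mono:
  assumes "distortion g" "u \<le> v" shows "clampG g u \<le> clampG g v"
  using assms unfolding clampG_def distortion_def
  by (intro mono_onD[of "{0..1}" g]) auto

lemma clampG_eq: "u \<in> {0..1} \<Longrightarrow> clampG g u = g u"
  by (simp add: clampG_def)

lemma clampG_deriv:
  assumes "(g has_real_derivative D) (at u)" "u \<in> {0<..<1}"
  shows "(clampG g has_real_derivative D) (at u)"
  by (rule has_field_derivative_transform_within_open[OF assms(1) _ assms(2)]) (auto simp: clampG_def)

lemma gd_nonneg:
  assumes "distortion g" "(g has_real_derivative D) (at u)" "u \<in> {0<..<1}"
  shows "0 \<le> D"
proof -
  have "(\<lambda>k. (clampG g (u + 1 / Suc k) - clampG g u) * Suc k) \<longlonglongrightarrow> D"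
    by (rule deriv_seq[OF clampG_deriv[OF assms(2,3)]])
  moreover have "0 \<le> (clampG g (u + 1 / Suc k) - clampG g u) * Suc k" for k
    using clampG_mono[OF assms(1), of u "u + 1 / Suc k"] by simp
  ultimately show ?thesis by (intro LIMSEQ_le_const[of _ D 0]) blast+
qed

lemma dq_le:
  assumes "distortion g" "(g has_real_derivative D) (at u)" "u \<in> {0<..<1}" "h > 0"
  shows "clampG g (u + h) - clampG g u \<le> D * h"
proof -
  have cv: "convex_on {0..1} (\<lambda>x. - g x)" using assms(1) by (simp add: distortion_def concave_on_def)
  have dd: "((\<lambda>x. - g x) has_field_derivative - D) (at u within {0..1})"
    using has_field_derivative_at_within[OF DERIV_minus[OF assms(2)]] .
  have int: "u \<in> interior {0..1::real}" using assms(3) by auto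
  have tang: "g x - g u \<le> D * (x - u)" if "x \<in> {0..1}" for x
  proof -
    have "- g x - - g u \<ge> - D * (x - u)"
      by (rule convex_on_imp_above_tangent[OF cv _ int that dd]) (simp add: is_interval_connected)
    then show ?thesis by (simp add: algebra_simps)
  qed
  have D0: "0 \<le> D" by (rule gd_nonneg[OF assms(1-3)])
  show ?thesis
  proof (cases "u + h \<le> 1")
    case True
    then show ?thesis using tang[of "u+h"] assms(3,4) by (simp add: clampG_eq)
  next
    case False
    then have "clampG g (u + h) = g 1" by (simp add: clampG_def)
    moreover have "g 1 - g u \<le> D * (1 - u)" using tang[of 1] by simp
    moreover have "D * (1 - u) \<le> D * h" using False D0 by (intro mult_left_mono) auto
    ultimately show ?thesis using assms(3) by (simp add: clampG_eq)
  qed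
qed

lemma clampG_meas[measurable]: "distortion g \<Longrightarrow> clampG g \<in> borel_measurable borel"
  by (rule borel_measurable_continuous_onI[OF clampG_cont])

lemma countable_sets_borel: "countable (C::real set) \<Longrightarrow> C \<in> sets borel"
  by (rule sets.countable) auto

lemma gdz_meas:
  assumes g: "distortion g" and C: "countable C"
    and d: "\<forall>t\<in>{0<..<1} - C. (g has_real_derivative gd t) (at t)"
  shows "gdz gd C \<in> borel_measurable borel"
proof (rule borel_measurable_LIMSEQ_real)
  let ?D = "{0<..<1} - C"
  have Db: "?D \<in> sets borel" using countable_sets_borel[OF C] by auto
  note clampG_meas[OF g, measurable]
  show "(\<lambda>x. indicator ?D x * ((clampG g (x + 1 / Suc k) - clampG g x) * Suc k)) \<in> borel_measurable borel" for k
    using Db by measurable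
  fix x :: real
  show "(\<lambda>k. indicator ?D x * ((clampG g (x + 1 / Suc k) - clampG g x) * Suc k)) \<longlonglongrightarrow> gdz gd C x"
  proof (cases "x \<in> ?D")
    case True
    then have "(\<lambda>k. (clampG g (x + 1 / Suc k) - clampG g x) * Suc k) \<longlonglongrightarrow> gd x"
      using d by (intro deriv_seq clampG_deriv) auto
    then show ?thesis using True by (simp add: gdz_def)
  next
    case False
    then have "gdz gd C x = 0" unfolding gdz_def by (rule if_not_P)
    then show ?thesis using False by simp
  qed
qed

lemma gdz_nonneg:
  assumes g: "distortion g" and d: "\<forall>t\<in>{0<..<1} - C. (g has_real_derivative gd t) (at t)"
  shows "0 \<le> gdz gd C u"
proof (cases "u \<in> {0<..<1} - C")
  case True
  then have "0 \<le> gd u" using gd_nonneg[OF g, of "gd u" u] d by blast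
  then show ?thesis using True unfolding gdz_def by simp
next
  case False
  then show ?thesis unfolding gdz_def by (subst if_not_P[OF False]) simp
qed

lemma ftc_gdz:
  assumes g: "distortion g" and C: "countable C"
    and d: "\<forall>t\<in>{0<..<1} - C. (g has_real_derivative gd t) (at t)"
    and s: "0 \<le> s" "s \<le> 1"
  shows "(\<integral>\<^sup>+u. ennreal (gdz gd C u) * indicator {0..<s} u \<partial>lborel) = ennreal (g s)"
proof -
  define G where "G = clampG g"
  have Gc: "continuous_on UNIV G" using clampG_cont[OF g] by (simp add: G_def)
  note Gm[measurable] = clampG_meas[OF g, folded G_def]
  define F where "F t = integral {-1..t} G" for t
  have Fd: "(F has_real_derivative G t) (at t)" if "t \<in> {-1<..<3}" for t
  proof -
    have "continuous_on {-1..3} G" using Gc by (rule continuous_on_subset) simp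
    then have "(F has_real_derivative G t) (at t within {-1..3})"
      unfolding F_def by (rule integral_has_real_derivative) (use that in auto)
    moreover have "t \<in> interior {-1..3::real}" using that by (simp add: interior_atLeastAtMost_real)
    ultimately show ?thesis using at_within_interior[of t "{-1..3::real}"] by metis
  qed
  define DQ where "DQ k u = (G (u + 1 / Suc k) - G u) * Suc k" for k u
  have DQc: "continuous_on A (DQ k)" for A k
  proof -
    have "continuous_on UNIV (\<lambda>u. G (u + 1 / Suc k))"
    proof (rule continuous_on_compose2[OF Gc])
      show "continuous_on UNIV (\<lambda>u::real. u + 1 / Suc k)" by (intro continuous_intros)
    qed auto
    then have "continuous_on UNIV (DQ k)"
      unfolding DQ_def by (intro continuous_intros Gc)
    then show ?thesis by (rule continuous_on_subset) auto
  qed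
  have DQm[measurable]: "DQ k \<in> borel_measurable borel" for k
    by (rule borel_measurable_continuous_onI[OF DQc])
  have DQnn: "0 \<le> DQ k u" for k u
    using clampG_mono[OF g, of u "u + 1 / Suc k"] by (simp add: DQ_def G_def)
  define \<Phi> where "\<Phi> k u = (F (u + 1 / Suc k) - F u) * Suc k" for k u
  have Phid: "(\<Phi> k has_real_derivative DQ k u) (at u)" if "u \<in> {0..1}" for k u
  proof -
    have h: "0 < 1 / real (Suc k)" "1 / real (Suc k) \<le> 1" by auto
    have "u + 1 / real (Suc k) \<in> {-1<..<3}" using that h unfolding greaterThanLessThan_iff atLeastAtMost_iff by (intro conjI; linarith)
    then have "(F has_real_derivative G (u + 1 / Suc k)) (at (u + 1 / Suc k))"
      by (rule Fd)
    then have a: "((\<lambda>x. F (x + 1 / Suc k)) has_real_derivative G (u + 1 / Suc k)) (at u)"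
      by (simp add: DERIV_shift)
    have b: "(F has_real_derivative G u) (at u)" using that by (intro Fd) auto
    show ?thesis unfolding \<Phi>_def DQ_def
      by (intro DERIV_cmult_right DERIV_diff a b)
  qed
  define I where "I k = (\<integral>\<^sup>+u. ennreal (DQ k u) * indicator {0..<s} u \<partial>lborel)" for k
  have Ival: "I k = ennreal (\<Phi> k s - \<Phi> k 0)" for k
  proof -
    have "interval_lebesgue_integral lborel (ereal 0) (ereal s) (DQ k) = \<Phi> k s - \<Phi> k 0"
    proof (rule interval_integral_FTC_finite)
      show "continuous_on {min 0 s..max 0 s} (DQ k)" by (rule DQc)
      fix x assume "min 0 s \<le> x" "x \<le> max 0 s"
      then have "x \<in> {0..1}" using s by auto
      then show "(\<Phi> k has_vector_derivative DQ k x) (at x within {min 0 s..max 0 s})"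
        using Phid[of x k] by (simp add: has_real_derivative_iff_has_vector_derivative has_vector_derivative_at_within)
    qed
    then have e1: "(LBINT u:{0..s}. DQ k u) = \<Phi> k s - \<Phi> k 0"
      using s interval_integral_Icc[of 0 s "DQ k"] by simp
    have int: "integrable lborel (\<lambda>u. indicator {0..s} u *\<^sub>R DQ k u)"
      by (rule borel_integrable_compact) (auto intro: DQc)
    have "I k = (\<integral>\<^sup>+u. ennreal (indicator {0..s} u *\<^sub>R DQ k u) \<partial>lborel)"
      unfolding I_def
    proof (rule nn_integral_cong_AE)
      have "AE u in lborel. u \<notin> {s}" by (rule AE_not_in) auto
      then show "AE u in lborel. ennreal (DQ k u) * indicator {0..<s} u = ennreal (indicator {0..s} u *\<^sub>R DQ k u)"
        by eventually_elim (auto simp: indicator_def)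
    qed
    also have "\<dots> = ennreal (LBINT u:{0..s}. DQ k u)"
      unfolding set_lebesgue_integral_def
      by (rule nn_integral_eq_integral[OF int]) (auto simp: DQnn indicator_def)
    finally show ?thesis using e1 by simp
  qed
  have lim: "(\<lambda>k. \<Phi> k s - \<Phi> k 0) \<longlonglongrightarrow> G s - G 0"
  proof -
    have "(\<lambda>k. (F (s + 1 / Suc k) - F s) * Suc k) \<longlonglongrightarrow> G s"
      using s by (intro deriv_seq Fd) auto
    moreover have "(\<lambda>k. (F (0 + 1 / Suc k) - F 0) * Suc k) \<longlonglongrightarrow> G 0"
      by (intro deriv_seq Fd) auto
    ultimately show ?thesis unfolding \<Phi>_def by (intro tendsto_diff) auto
  qed
  have G0: "G s - G 0 = g s"
    using s g by (simp add: G_def clampG_eq distortion_def)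
  have Ilim: "I \<longlonglongrightarrow> ennreal (g s)"
    unfolding Ival G0[symmetric] by (intro tendsto_ennrealI lim)
  define J where "J = (\<integral>\<^sup>+u. ennreal (gdz gd C u) * indicator {0..<s} u \<partial>lborel)"
  have AEgood: "AE u in lborel. u \<notin> C \<union> {0}"
    by (rule AE_not_in) (use C in \<open>auto intro: countable_imp_null_set_lborel\<close>)
  have good: "u \<in> {0<..<1} - C" if "u \<notin> C \<union> {0}" "u \<in> {0..<s}" for u
    using that s by auto
  have le: "I k \<le> J" for k
    unfolding I_def J_def
  proof (rule nn_integral_mono_AE)
    show "AE u in lborel. ennreal (DQ k u) * indicator {0..<s} u \<le> ennreal (gdz gd C u) * indicator {0..<s} u"
      using AEgood
    proof eventually_elim
      case (elim u)
      show ?case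
      proof (cases "u \<in> {0..<s}")
        case True
        then have u: "u \<in> {0<..<1} - C" using good elim by auto
        have "G (u + 1 / Suc k) - G u \<le> gd u * (1 / Suc k)"
          unfolding G_def using u d by (intro dq_le[OF g]) auto
        then have "DQ k u \<le> gd u"
          unfolding DQ_def by (simp add: field_simps)
        then show ?thesis using True u by (simp add: gdz_def ennreal_leI)
      qed simp
    qed
  qed
  have ge: "ennreal (g s) \<le> J"
    by (rule LIMSEQ_le_const2[OF Ilim]) (use le in auto)
  have "J = (\<integral>\<^sup>+u. liminf (\<lambda>k. ennreal (DQ k u) * indicator {0..<s} u) \<partial>lborel)"
    unfolding J_def
  proof (rule nn_integral_cong_AE)
    show "AE u in lborel. ennreal (gdz gd C u) * indicator {0..<s} u = liminf (\<lambda>k. ennreal (DQ k u) * indicator {0..<s} u)"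
      using AEgood
    proof eventually_elim
      case (elim u)
      show ?case
      proof (cases "u \<in> {0..<s}")
        case True
        then have u: "u \<in> {0<..<1} - C" using good elim by auto
        have "(\<lambda>k. DQ k u) \<longlonglongrightarrow> gd u"
          unfolding DQ_def G_def using u d by (intro deriv_seq clampG_deriv) auto
        then have "(\<lambda>k. ennreal (DQ k u) * indicator {0..<s} u) \<longlonglongrightarrow> ennreal (gdz gd C u) * indicator {0..<s} u"
          using True u by (simp add: gdz_def tendsto_ennrealI)
        then show ?thesis by (simp add: lim_imp_Liminf)
      qed (simp add: Liminf_const)
    qed
  qed
  also have "\<dots> \<le> liminf I"
    unfolding I_def by (rule nn_integral_liminf) measurable
  also have "liminf I = ennreal (g s)"
    by (rule lim_imp_Liminf[OF _ Ilim]) simp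
  finally have "J \<le> ennreal (g s)" .
  then show ?thesis using ge unfolding J_def by (rule antisym)
qed

locale mtsetup = prob_space M for M :: "'a measure" +
  fixes Xs :: "nat \<Rightarrow> 'a \<Rightarrow> real" and n i :: nat and f :: "real \<Rightarrow> ennreal"
  assumes Xs: "\<forall>j\<in>{1..n}. integrable M (Xs j) \<and> (\<forall>\<omega>\<in>space M. 0 \<le> Xs j \<omega>)"
    and dist: "distributed M lborel (Xtot Xs n) f"
    and i: "i \<in> {1..n}"
begin

abbreviation "X \<equiv> Xtot Xs n"
abbreviation "S \<equiv> surv M X"

lemma X_meas[measurable]: "X \<in> borel_measurable M"
  using distributed_measurable[OF dist] by simp

lemma Xi_meas[measurable]: "Xs i \<in> borel_measurable M"
  using Xs i by auto

lemma X_nonneg: "\<omega> \<in> space M \<Longrightarrow> 0 \<le> X \<omega>"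
  using Xs unfolding Xtot_def by (auto intro!: sum_nonneg)

lemma Xi_nonneg: "\<omega> \<in> space M \<Longrightarrow> 0 \<le> Xs i \<omega>"
  using Xs i by auto

lemma Xi_le_X: "\<omega> \<in> space M \<Longrightarrow> Xs i \<omega> \<le> X \<omega>"
  unfolding Xtot_def using Xs i by (intro member_le_sum) auto

lemma no_atom: "prob {\<omega>\<in>space M. X \<omega> = t} = 0"
proof -
  have "emeasure M (X -` {t} \<inter> space M) = (\<integral>\<^sup>+x. f x * indicator {t} x \<partial>lborel)"
    using distributed_emeasure[OF dist] by simp
  also have "\<dots> = 0"
    by (simp add: nn_integral_indicator_singleton)
  finally have "emeasure M (X -` {t} \<inter> space M) = 0" by simp
  moreover have "X -` {t} \<inter> space M = {\<omega>\<in>space M. X \<omega> = t}" by auto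
  ultimately show ?thesis by (simp add: measure_def)
qed

definition "D = distr M lborel X"

lemma D_real: "real_distribution D"
proof -
  have "D = distr M borel X" unfolding D_def by (rule distr_cong) auto
  then show ?thesis by (simp add: real_distribution_distr)
qed

lemma S_cdf: "S t = 1 - cdf D t"
proof -
  have "cdf D t = prob {\<omega>\<in>space M. X \<omega> \<le> t}"
    unfolding cdf_def D_def by (subst measure_distr) (auto intro!: arg_cong[where f=prob])
  moreover have "{\<omega>\<in>space M. X \<omega> > t} = space M - {\<omega>\<in>space M. X \<omega> \<le> t}" by auto
  ultimately show ?thesis unfolding surv_def
    by (simp add: prob_compl)
qed

lemma S_cont: "isCont S t"
proof -
  interpret D: real_distribution D by (rule D_real)
  have "measure D {t} = prob {\<omega>\<in>space M. X \<omega> = t}"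
    unfolding D_def by (subst measure_distr) (auto intro!: arg_cong[where f=prob])
  then have "isCont (cdf D) t" using no_atom D.isCont_cdf by simp
  then have "isCont (\<lambda>t. 1 - cdf D t) t" by (intro continuous_intros)
  then show ?thesis by (simp add: S_cdf[abs_def])
qed

lemma S_cont_on: "continuous_on A S"
  using S_cont by (simp add: continuous_at_imp_continuous_on)

lemma S_meas[measurable]: "S \<in> borel_measurable borel"
  by (rule borel_measurable_continuous_onI[OF S_cont_on])

lemma S_range: "0 \<le> S t" "S t \<le> 1"
  unfolding surv_def by auto

lemma S_antimono: "s \<le> t \<Longrightarrow> S t \<le> S s"
  unfolding surv_def by (intro finite_measure_mono) auto

lemma S_neg: "t < 0 \<Longrightarrow> S t = 1"
proof -
  assume t: "t < 0"
  have "{\<omega>\<in>space M. X \<omega> > t} = space M" using X_nonneg t by force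
  then show ?thesis unfolding surv_def by (simp add: prob_space)
qed

lemma S_lim: "(S \<longlongrightarrow> 0) at_top"
proof -
  interpret D: real_distribution D by (rule D_real)
  have "((\<lambda>t. 1 - cdf D t) \<longlongrightarrow> 1 - 1) at_top"
    by (intro tendsto_intros D.cdf_lim_at_top_prob)
  then show ?thesis by (simp add: S_cdf[abs_def])
qed

end

lemma ennreal_div1: "(x::ennreal) / 1 = x" by (simp add: divide_ennreal_def)

context mtsetup begin

abbreviation "U \<equiv> \<lambda>\<omega>. S (X \<omega>)"

lemma U_meas[measurable]: "U \<in> borel_measurable M"
  by measurable

lemma U_le_mid:
  assumes u: "0 < u" "u < 1"
  shows "prob {\<omega>\<in>space M. U \<omega> \<le> u} = u"
proof -
  define T where "T = {t. S t \<le> u}"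
  have "eventually (\<lambda>t. S t < u) at_top"
    by (rule order_tendstoD(2)[OF S_lim u(1)])
  then obtain t0 where "S t0 < u" using eventually_happens' by (metis eventually_at_top_linorder order_refl)
  then have "t0 \<in> T" unfolding T_def by simp
  then have ne: "T \<noteq> {}" by auto
  have bdd: "\<forall>t\<in>T. 0 \<le> t"
  proof
    fix t assume "t \<in> T"
    then have "S t \<le> u" by (simp add: T_def)
    then show "0 \<le> t" using S_neg[of t] u by (cases "t < 0") auto
  qed
  then have bdd': "bdd_below T" by (auto intro: bdd_belowI)
  have cl: "closed T" unfolding T_def
    by (intro closed_Collect_le S_cont_on continuous_on_const)
  define ts where "ts = Inf T"
  have tsT: "ts \<in> T" unfolding ts_def by (rule closed_contains_Inf[OF ne bdd' cl])
  then have le: "S ts \<le> u" by (simp add: T_def)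
  have below: "S t > u" if "t < ts" for t
  proof (rule ccontr)
    assume "\<not> S t > u"
    then have "t \<in> T" by (simp add: T_def)
    then have "ts \<le> t" unfolding ts_def using bdd' by (rule cInf_lower)
    then show False using that by simp
  qed
  have ge: "u \<le> S ts"
  proof -
    have "(\<lambda>k. ts - 1 / Suc k) \<longlonglongrightarrow> ts - 0"
      by (intro tendsto_intros LIMSEQ_inverse_real_of_nat[unfolded inverse_eq_divide])
    then have "(\<lambda>k. S (ts - 1 / Suc k)) \<longlonglongrightarrow> S ts"
      using isCont_tendsto_compose[OF S_cont] by simp
    moreover have "\<forall>k. u \<le> S (ts - 1 / Suc k)"
      using below by (auto intro: less_imp_le)
    ultimately show ?thesis by (intro LIMSEQ_le_const[of _ "S ts"]) auto
  qed
  have Sts: "S ts = u" using le ge by simp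
  have eq: "{\<omega>\<in>space M. U \<omega> \<le> u} = {\<omega>\<in>space M. X \<omega> > ts} \<union> {\<omega>\<in>space M. X \<omega> = ts}"
  proof (intro set_eqI iffI)
    fix \<omega> assume a: "\<omega> \<in> {\<omega>\<in>space M. U \<omega> \<le> u}"
    then have "\<not> X \<omega> < ts" using below[of "X \<omega>"] by auto
    then show "\<omega> \<in> {\<omega>\<in>space M. X \<omega> > ts} \<union> {\<omega>\<in>space M. X \<omega> = ts}" using a by auto
  next
    fix \<omega> assume a: "\<omega> \<in> {\<omega>\<in>space M. X \<omega> > ts} \<union> {\<omega>\<in>space M. X \<omega> = ts}"
    then have "ts \<le> X \<omega>" "\<omega> \<in> space M" by auto
    then show "\<omega> \<in> {\<omega>\<in>space M. U \<omega> \<le> u}" using S_antimono[of ts "X \<omega>"] Sts by simp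
  qed
  have "prob {\<omega>\<in>space M. U \<omega> \<le> u} = prob {\<omega>\<in>space M. X \<omega> > ts} + prob {\<omega>\<in>space M. X \<omega> = ts}"
    unfolding eq by (rule finite_measure_Union) auto
  also have "\<dots> = u" using no_atom Sts by (simp add: surv_def)
  finally show ?thesis .
qed

lemma U_le: "u \<in> {0..1} \<Longrightarrow> prob {\<omega>\<in>space M. U \<omega> \<le> u} = u"
proof -
  assume u: "u \<in> {0..1}"
  consider "u = 0" | "u = 1" | "0 < u \<and> u < 1" using u by fastforce
  then show ?thesis
  proof cases
    case 1
    have "prob {\<omega>\<in>space M. U \<omega> \<le> 0} \<le> 1 / Suc (Suc k)" for k
    proof -
      have z: "(0::real) \<le> 1 / Suc (Suc k)" by simp
      have "prob {\<omega>\<in>space M. U \<omega> \<le> 0} \<le> prob {\<omega>\<in>space M. U \<omega> \<le> 1 / Suc (Suc k)}"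
        using z by (intro finite_measure_mono) (auto intro: order_trans)
      also have "\<dots> = 1 / Suc (Suc k)" by (intro U_le_mid) auto
      finally show ?thesis .
    qed
    moreover have "(\<lambda>k. 1 / real (Suc (Suc k))) \<longlonglongrightarrow> 0"
      using LIMSEQ_inverse_real_of_nat[THEN LIMSEQ_Suc] by (simp add: inverse_eq_divide)
    ultimately have "prob {\<omega>\<in>space M. U \<omega> \<le> 0} \<le> 0"
      by (intro LIMSEQ_le_const[of "\<lambda>k. 1 / real (Suc (Suc k))"]) auto
    then show ?thesis using 1 by (simp add: measure_nonneg antisym)
  next
    case 2
    have "{\<omega>\<in>space M. U \<omega> \<le> 1} = space M" using S_range by auto
    then show ?thesis using 2 by (simp add: prob_space)
  next
    case 3 then show ?thesis by (intro U_le_mid) auto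
  qed
qed

definition "DU = distr M lborel U"
definition "UNF = uniform_measure lborel {0..1::real}"

lemma UNF_real: "real_distribution UNF"
proof -
  have "prob_space UNF" unfolding UNF_def by (intro prob_space_uniform_measure) auto
  then show ?thesis unfolding real_distribution_def real_distribution_axioms_def
    by (simp add: UNF_def)
qed

lemma DU_real: "real_distribution DU"
proof -
  have "DU = distr M borel U" unfolding DU_def by (rule distr_cong) auto
  then show ?thesis by (simp add: real_distribution_distr)
qed

lemma DU_eq: "DU = UNF"
proof (rule cdf_unique[OF DU_real UNF_real])
  show "cdf DU = cdf UNF"
  proof
    fix u :: real
    have c1: "cdf DU u = prob {\<omega>\<in>space M. U \<omega> \<le> u}"
      unfolding cdf_def DU_def by (subst measure_distr) (auto intro!: arg_cong[where f=prob])
    have c2: "cdf UNF u = measure lborel ({0..1} \<inter> {..u})"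
      unfolding cdf_def UNF_def measure_def
      by (subst emeasure_uniform_measure) (auto simp: ennreal_div1)
    consider "u < 0" | "u \<in> {0..1}" | "1 < u" by fastforce
    then show "cdf DU u = cdf UNF u"
    proof cases
      case 1
      have e: "{\<omega>\<in>space M. U \<omega> \<le> u} = {}" using S_range 1 by (auto simp: not_le) (meson le_less_trans not_less)
      have e2: "{0..1} \<inter> {..u} = ({}::real set)" using 1 by auto
      have "cdf DU u = 0" unfolding c1 e by simp
      moreover have "cdf UNF u = 0" unfolding c2 e2 by simp
      ultimately show ?thesis by simp
    next
      case 2
      have "{0..1} \<inter> {..u} = {0..u}" using 2 by auto
      then show ?thesis using c1 c2 2 U_le by simp
    next
      case 3
      have "U x \<le> u" for x using S_range(2)[of "X x"] 3 by linarith
      then have "{\<omega>\<in>space M. U \<omega> \<le> u} = space M" by auto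
      moreover have "{0..1} \<inter> {..u} = {0..1::real}" using 3 by auto
      ultimately show ?thesis using c1 c2 by (simp add: prob_space)
    qed
  qed
qed

lemma U_nn_integral:
  assumes [measurable]: "\<phi> \<in> borel_measurable borel"
  shows "(\<integral>\<^sup>+\<omega>. \<phi> (U \<omega>) \<partial>M) = (\<integral>\<^sup>+u. \<phi> u * indicator {0..1} u \<partial>lborel)"
proof -
  have "(\<integral>\<^sup>+\<omega>. \<phi> (U \<omega>) \<partial>M) = (\<integral>\<^sup>+u. \<phi> u \<partial>DU)"
    unfolding DU_def by (subst nn_integral_distr) auto
  also have "\<dots> = (\<integral>\<^sup>+u. \<phi> u \<partial>UNF)" by (simp add: DU_eq)
  also have "\<dots> = (\<integral>\<^sup>+u. \<phi> u * indicator {0..1} u \<partial>lborel)"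
    unfolding UNF_def by (subst nn_integral_uniform_measure) (auto simp: ennreal_div1)
  finally show ?thesis .
qed

lemma U_prob:
  assumes "B \<in> sets borel"
  shows "prob {\<omega>\<in>space M. U \<omega> \<in> B} = measure lborel ({0..1} \<inter> B)"
proof -
  have "prob {\<omega>\<in>space M. U \<omega> \<in> B} = measure DU B"
    unfolding DU_def using assms by (subst measure_distr) (auto intro!: arg_cong[where f=prob])
  also have "\<dots> = measure lborel ({0..1} \<inter> B)"
    unfolding DU_eq UNF_def measure_def using assms by (subst emeasure_uniform_measure) (auto simp: ennreal_div1)
  finally show ?thesis .
qed

end

lemma countable_modif_meas:
  fixes h f :: "real \<Rightarrow> real"
  assumes h: "h \<in> borel_measurable borel" and D: "countable D"
  shows "(\<lambda>u. if u \<in> D then f u else h u) \<in> borel_measurable borel"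
proof (rule borel_measurableI)
  fix B :: "real set" assume "open B"
  then have Bb: "B \<in> sets borel" by simp
  have "(\<lambda>u. if u \<in> D then f u else h u) -` B \<inter> space borel = (D \<inter> f -` B) \<union> ((- D) \<inter> (h -` B \<inter> space borel))"
    by (auto split: if_splits)
  moreover have "D \<inter> f -` B \<in> sets borel"
    by (rule countable_sets_borel) (use D in \<open>auto intro: countable_subset\<close>)
  moreover have "- D \<in> sets borel" using countable_sets_borel[OF D] by auto
  moreover have "h -` B \<inter> space borel \<in> sets borel" using h Bb by (rule measurable_sets)
  ultimately show "(\<lambda>u. if u \<in> D then f u else h u) -` B \<inter> space borel \<in> sets borel" by auto
qed

locale mtsetup2 = mtsetup +
  fixes g gd :: "real \<Rightarrow> real" and C :: "real set"
  assumes g: "distortion g" and C: "countable C"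
    and d: "\<forall>t\<in>{0<..<1} - C. (g has_real_derivative gd t) (at t)"
begin

abbreviation "Q \<equiv> Qm M gd X"

lemma gdz_meas'[measurable]: "gdz gd C \<in> borel_measurable borel"
  by (rule gdz_meas[OF g C d])

lemma gdU_meas[measurable]: "(\<lambda>\<omega>. gd (U \<omega>)) \<in> borel_measurable M"
proof -
  define k where "k u = (if u \<in> C \<union> {0,1} then gd u else gdz gd C u)" for u
  have km[measurable]: "k \<in> borel_measurable borel"
    unfolding k_def by (rule countable_modif_meas) (use C in auto)
  have "gd (U \<omega>) = k (U \<omega>)" if "\<omega> \<in> space M" for \<omega>
    using S_range[of "X \<omega>"] by (auto simp: k_def gdz_def)
  then show ?thesis
    by (subst measurable_cong[where g="\<lambda>\<omega>. k (U \<omega>)"]) auto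
qed

lemma space_Q[simp]: "space Q = space M" and sets_Q[simp]: "sets Q = sets M"
  by (simp_all add: Qm_def)

lemma U_bad_null: "{\<omega>\<in>space M. U \<omega> \<in> C \<union> {0,1}} \<in> null_sets M"
proof -
  have Cb: "C \<union> {0,1} \<in> sets borel" using countable_sets_borel C by auto
  have "prob {\<omega>\<in>space M. U \<omega> \<in> C \<union> {0,1}} = measure lborel ({0..1} \<inter> (C \<union> {0,1}))"
    by (rule U_prob[OF Cb])
  also have "\<dots> = 0"
  proof -
    have "countable ({0..1} \<inter> (C \<union> {0,1::real}))" using C by auto
    then have "{0..1} \<inter> (C \<union> {0,1::real}) \<in> null_sets lborel" by (rule countable_imp_null_set_lborel)
    then show ?thesis by (simp add: measure_def null_setsD1)
  qed
  moreover have "U -` (C \<union> {0,1}) \<inter> space M \<in> sets M" by (rule measurable_sets[OF U_meas Cb])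
  moreover have "U -` (C \<union> {0,1}) \<inter> space M = {\<omega>\<in>space M. U \<omega> \<in> C \<union> {0,1}}" by auto
  ultimately show ?thesis by (subst null_sets_def) (auto simp: emeasure_eq_measure)
qed

lemma N2_null: "{\<omega>\<in>space M. x < X \<omega> \<and> S x \<le> U \<omega>} \<in> null_sets M"
proof -
  have sub: "{\<omega>\<in>space M. S x \<le> U \<omega>} = {\<omega>\<in>space M. X \<omega> \<le> x} \<union> {\<omega>\<in>space M. x < X \<omega> \<and> S x \<le> U \<omega>}"
    using S_antimono by force
  have "prob {\<omega>\<in>space M. S x \<le> U \<omega>} = prob {\<omega>\<in>space M. X \<omega> \<le> x} + prob {\<omega>\<in>space M. x < X \<omega> \<and> S x \<le> U \<omega>}"
    unfolding sub by (rule finite_measure_Union) auto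
  moreover have "prob {\<omega>\<in>space M. S x \<le> U \<omega>} = 1 - S x"
  proof -
    have "prob {\<omega>\<in>space M. S x \<le> U \<omega>} = prob {\<omega>\<in>space M. U \<omega> \<in> {S x..}}" by simp
    also have "\<dots> = measure lborel ({0..1} \<inter> {S x..})" by (rule U_prob) simp
    also have "{0..1} \<inter> {S x..} = {S x..1}" using S_range[of x] by auto
    also have "measure lborel {S x..1} = 1 - S x" using S_range[of x] by simp
    finally show ?thesis .
  qed
  moreover have "prob {\<omega>\<in>space M. X \<omega> \<le> x} = 1 - S x"
  proof -
    have "{\<omega>\<in>space M. X \<omega> \<le> x} = space M - {\<omega>\<in>space M. X \<omega> > x}" by auto
    then show ?thesis by (simp add: prob_compl surv_def)
  qed
  ultimately have "prob {\<omega>\<in>space M. x < X \<omega> \<and> S x \<le> U \<omega>} = 0" by simp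
  then show ?thesis by (subst null_sets_def) (auto simp: emeasure_eq_measure)
qed

lemma KQ: "emeasure Q {\<omega>\<in>space M. X \<omega> > x} = ennreal (g (S x))"
proof -
  define \<phi> where "\<phi> u = ennreal (gdz gd C u) * indicator {..<S x} u" for u
  have \<phi>m[measurable]: "\<phi> \<in> borel_measurable borel" unfolding \<phi>_def by measurable
  have "emeasure Q {\<omega>\<in>space M. X \<omega> > x} = (\<integral>\<^sup>+\<omega>. ennreal (gd (U \<omega>)) * indicator {\<omega>\<in>space M. X \<omega> > x} \<omega> \<partial>M)"
    unfolding Qm_def by (subst emeasure_density) auto
  also have "\<dots> = (\<integral>\<^sup>+\<omega>. \<phi> (U \<omega>) \<partial>M)"
  proof (rule nn_integral_cong_AE)
    have a1: "AE \<omega> in M. \<omega> \<notin> {\<omega>\<in>space M. U \<omega> \<in> C \<union> {0,1}}" by (rule AE_not_in[OF U_bad_null])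
    have a2: "AE \<omega> in M. \<omega> \<notin> {\<omega>\<in>space M. x < X \<omega> \<and> S x \<le> U \<omega>}" by (rule AE_not_in[OF N2_null])
    show "AE \<omega> in M. ennreal (gd (U \<omega>)) * indicator {\<omega>\<in>space M. X \<omega> > x} \<omega> = \<phi> (U \<omega>)"
      using a1 a2 AE_space
    proof eventually_elim
      case (elim \<omega>)
      show ?case
      proof (cases "x < X \<omega>")
        case True
        then have lt: "U \<omega> < S x" using elim by auto
        have "U \<omega> \<in> {0<..<1} - C" using elim S_range[of "X \<omega>"] by auto
        then have "gdz gd C (U \<omega>) = gd (U \<omega>)" by (simp add: gdz_def)
        then show ?thesis using True lt elim by (simp add: \<phi>_def)
      next
        case False
        then have "S x \<le> U \<omega>" using S_antimono[of "X \<omega>" x] by simp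
        then show ?thesis using False by (simp add: \<phi>_def)
      qed
    qed
  qed
  also have "\<dots> = (\<integral>\<^sup>+u. \<phi> u * indicator {0..1} u \<partial>lborel)" by (rule U_nn_integral[OF \<phi>m])
  also have "\<dots> = (\<integral>\<^sup>+u. ennreal (gdz gd C u) * indicator {0..<S x} u \<partial>lborel)"
  proof (rule nn_integral_cong)
    fix u :: real
    show "\<phi> u * indicator {0..1} u = ennreal (gdz gd C u) * indicator {0..<S x} u"
      using S_range[of x] by (auto simp: \<phi>_def indicator_def)
  qed
  also have "\<dots> = ennreal (g (S x))"
    by (rule ftc_gdz[OF g C d S_range])
  finally show ?thesis .
qed

lemma g_range: "t \<in> {0..1} \<Longrightarrow> g t \<in> {0..1}"
  using g unfolding distortion_def by (auto simp: image_subset_iff)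

lemma Q_prob: "prob_space Q"
proof
  have "{\<omega>\<in>space M. X \<omega> > -1} = space M" using X_nonneg by force
  then have "emeasure Q (space M) = ennreal (g (S (-1)))" using KQ[of "-1"] by simp
  also have "\<dots> = 1" using S_neg[of "-1"] g by (simp add: distortion_def)
  finally show "emeasure Q (space Q) = 1" by simp
qed

lemma measure_Q: "measure Q {\<omega>\<in>space M. X \<omega> > x} = g (S x)"
  using KQ[of x] g_range[of "S x"] S_range[of x] by (simp add: measure_def)

end

definition "AN N R Y x = (\<integral>\<omega>. R \<omega> * indicator {\<omega>\<in>space N. Y \<omega> > x} \<omega> \<partial>N)"
definition "SN N Y x = measure N {\<omega>\<in>space N. Y \<omega> > x}"

context
  fixes N :: "'a measure" and R Y :: "'a \<Rightarrow> real"
  assumes fin: "finite_measure N"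
    and Rm[measurable]: "R \<in> borel_measurable N" and Ym[measurable]: "Y \<in> borel_measurable N"
    and bnd: "\<And>\<omega>. \<omega> \<in> space N \<Longrightarrow> 0 \<le> R \<omega> \<and> R \<omega> \<le> 1"
begin

interpretation finite_measure N by (rule fin)

abbreviation "AN' \<equiv> AN N R Y"
abbreviation "SN' \<equiv> SN N Y"

lemma int_Rind: "integrable N (\<lambda>\<omega>. R \<omega> * indicator {\<omega>\<in>space N. Y \<omega> > x} \<omega>)"
  by (rule integrable_const_bound[where B=1]) (auto simp: bnd indicator_def intro!: AE_I2)

lemma int_ind: "integrable N (\<lambda>\<omega>. indicator {\<omega>\<in>space N. Y \<omega> > x} \<omega> :: real)"
proof (rule integrable_const_bound[where B=1])
  show "AE \<omega> in N. norm (indicator {\<omega>\<in>space N. Y \<omega> > x} \<omega> :: real) \<le> 1"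
    by (intro AE_I2) (simp add: indicator_def)
qed measurable

lemma AN_bounds: "0 \<le> AN' x" "AN' x \<le> SN' x"
proof -
  show "0 \<le> AN' x" unfolding AN_def by (intro integral_nonneg_AE AE_I2) (auto simp: bnd)
  have "AN' x \<le> (\<integral>\<omega>. indicator {\<omega>\<in>space N. Y \<omega> > x} \<omega> \<partial>N)"
    unfolding AN_def by (intro integral_mono_AE int_Rind int_ind AE_I2) (auto simp: bnd indicator_def)
  also have "\<dots> = SN' x" unfolding SN_def by simp
  finally show "AN' x \<le> SN' x" .
qed

lemma AN_diff: assumes "x \<le> y" shows "0 \<le> AN' x - AN' y" "AN' x - AN' y \<le> SN' x - SN' y"
proof -
  let ?I = "\<lambda>x \<omega>. indicator {\<omega>\<in>space N. Y \<omega> > x} \<omega> :: real"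
  have e: "AN' x - AN' y = (\<integral>\<omega>. R \<omega> * (?I x \<omega> - ?I y \<omega>) \<partial>N)"
  proof -
    have "AN' x - AN' y = (\<integral>\<omega>. R \<omega> * ?I x \<omega> - R \<omega> * ?I y \<omega> \<partial>N)"
      unfolding AN_def by (rule Bochner_Integration.integral_diff[OF int_Rind int_Rind, symmetric])
    then show ?thesis by (simp add: right_diff_distrib)
  qed
  have e2: "SN' x - SN' y = (\<integral>\<omega>. (?I x \<omega> - ?I y \<omega>) \<partial>N)"
    unfolding SN_def by (subst Bochner_Integration.integral_diff[OF int_ind int_ind]) auto
  have p: "0 \<le> ?I x \<omega> - ?I y \<omega>" for \<omega> using assms by (auto simp: indicator_def)
  have ii: "integrable N (\<lambda>\<omega>. R \<omega> * (?I x \<omega> - ?I y \<omega>))"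
    unfolding right_diff_distrib by (rule Bochner_Integration.integrable_diff[OF int_Rind int_Rind])
  show "0 \<le> AN' x - AN' y" unfolding e
    by (intro integral_nonneg_AE AE_I2 mult_nonneg_nonneg p) (simp add: bnd)
  show "AN' x - AN' y \<le> SN' x - SN' y" unfolding e e2
  proof (intro integral_mono_AE ii AE_I2 Bochner_Integration.integrable_diff int_ind)
    fix \<omega> assume "\<omega> \<in> space N"
    then show "R \<omega> * (?I x \<omega> - ?I y \<omega>) \<le> ?I x \<omega> - ?I y \<omega>"
      using bnd p by (intro mult_left_le_one_le) auto
  qed
qed

lemma AN_cont: assumes "isCont SN' x0" shows "isCont AN' x0"
proof -
  have "((\<lambda>x. AN' x - AN' x0) \<longlongrightarrow> 0) (at x0)"
  proof (rule Lim_null_comparison)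
    show "\<forall>\<^sub>F x in at x0. norm (AN' x - AN' x0) \<le> \<bar>SN' x - SN' x0\<bar>"
    proof (intro always_eventually allI)
      fix x show "norm (AN' x - AN' x0) \<le> \<bar>SN' x - SN' x0\<bar>"
        using AN_diff[of x x0] AN_diff[of x0 x] by (cases "x \<le> x0") auto
    qed
    have "((\<lambda>x. SN' x - SN' x0) \<longlongrightarrow> SN' x0 - SN' x0) (at x0)"
      using assms by (intro tendsto_intros) (simp add: isCont_def)
    then show "((\<lambda>x. \<bar>SN' x - SN' x0\<bar>) \<longlongrightarrow> 0) (at x0)"
      using tendsto_rabs_zero_iff by fastforce
  qed
  then show ?thesis unfolding isCont_def using LIM_zero_cancel by blast
qed

lemma fubini_eq:
  assumes Y0: "\<And>\<omega>. \<omega> \<in> space N \<Longrightarrow> 0 \<le> Y \<omega>" and b: "0 \<le> b"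
    and Ac: "continuous_on UNIV AN'"
  shows "(\<integral>\<omega>. R \<omega> * min (Y \<omega>) b \<partial>N) = (LINT x:{0..b}|lborel. AN' x)"
proof -
  have ANm[measurable]: "AN' \<in> borel_measurable borel" by (rule borel_measurable_continuous_onI[OF Ac])
  have intA: "set_integrable lborel {0..b} AN'"
    unfolding set_integrable_def by (rule borel_integrable_compact) (auto intro: continuous_on_subset[OF Ac])
  define F where "F p = ennreal (R (fst p) * (if snd p < Y (fst p) then 1 else 0) * indicator {0..b} (snd p))" for p
  have Fm[measurable]: "F \<in> borel_measurable (N \<Otimes>\<^sub>M lborel)" unfolding F_def by measurable
  interpret ps: pair_sigma_finite N lborel
    unfolding pair_sigma_finite_def using fin by (auto intro: finite_measure.sigma_finite_measure[OF fin] lborel.sigma_finite_measure_axioms)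
  have inner1: "(\<integral>\<^sup>+x. F (\<omega>, x) \<partial>lborel) = ennreal (R \<omega> * min (Y \<omega>) b)" if \<omega>: "\<omega> \<in> space N" for \<omega>
  proof -
    have "(\<integral>\<^sup>+x. F (\<omega>, x) \<partial>lborel) = (\<integral>\<^sup>+x. ennreal (R \<omega>) * indicator {0..<min (Y \<omega>) b} x \<partial>lborel)"
    proof (rule nn_integral_cong_AE)
      have "AE x in lborel. x \<notin> {b}" by (rule AE_not_in) auto
      then show "AE x in lborel. F (\<omega>, x) = ennreal (R \<omega>) * indicator {0..<min (Y \<omega>) b} x"
        by eventually_elim (auto simp: F_def indicator_def)
    qed
    also have "\<dots> = ennreal (R \<omega>) * emeasure lborel {0..<min (Y \<omega>) b}"
      by (rule nn_integral_cmult_indicator) simp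
    also have "\<dots> = ennreal (R \<omega> * min (Y \<omega>) b)"
      using Y0[OF \<omega>] b bnd[OF \<omega>] by (simp add: ennreal_mult)
    finally show ?thesis .
  qed
  have inner2: "(\<integral>\<^sup>+\<omega>. F (\<omega>, x) \<partial>N) = ennreal (AN' x * indicator {0..b} x)" for x
  proof -
    have "(\<integral>\<^sup>+\<omega>. F (\<omega>, x) \<partial>N) = (\<integral>\<^sup>+\<omega>. ennreal (R \<omega> * indicator {\<omega>\<in>space N. Y \<omega> > x} \<omega> * indicator {0..b} x) \<partial>N)"
      by (rule nn_integral_cong) (auto simp: F_def indicator_def)
    also have "\<dots> = ennreal (\<integral>\<omega>. R \<omega> * indicator {\<omega>\<in>space N. Y \<omega> > x} \<omega> * indicator {0..b} x \<partial>N)"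
      by (rule nn_integral_eq_integral) (auto intro!: integrable_mult_left int_Rind AE_I2 simp: bnd)
    also have "\<dots> = ennreal (AN' x * indicator {0..b} x)"
      unfolding AN_def by simp
    finally show ?thesis .
  qed
  have rb: "R \<omega> * min (Y \<omega>) b \<le> b" if "\<omega> \<in> space N" for \<omega>
  proof -
    have "R \<omega> * min (Y \<omega>) b \<le> min (Y \<omega>) b"
      using bnd[OF that] Y0[OF that] b by (intro mult_left_le_one_le) auto
    then show ?thesis by simp
  qed
  have int1: "integrable N (\<lambda>\<omega>. R \<omega> * min (Y \<omega>) b)"
    by (rule integrable_const_bound[where B=b])
       (auto intro!: AE_I2 simp: abs_mult bnd Y0 b rb)
  have "ennreal (\<integral>\<omega>. R \<omega> * min (Y \<omega>) b \<partial>N) = (\<integral>\<^sup>+\<omega>. ennreal (R \<omega> * min (Y \<omega>) b) \<partial>N)"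
    by (rule nn_integral_eq_integral[symmetric, OF int1]) (auto intro!: AE_I2 simp: bnd Y0 b)
  also have "\<dots> = (\<integral>\<^sup>+\<omega>. (\<integral>\<^sup>+x. F (\<omega>, x) \<partial>lborel) \<partial>N)"
    by (rule nn_integral_cong) (simp add: inner1)
  also have "\<dots> = (\<integral>\<^sup>+x. (\<integral>\<^sup>+\<omega>. F (\<omega>, x) \<partial>N) \<partial>lborel)"
    by (rule ps.Fubini[symmetric]) simp
  also have "\<dots> = (\<integral>\<^sup>+x. ennreal (AN' x * indicator {0..b} x) \<partial>lborel)"
    by (simp add: inner2)
  also have "\<dots> = ennreal (\<integral>x. AN' x * indicator {0..b} x \<partial>lborel)"
    using intA unfolding set_integrable_def
    by (intro nn_integral_eq_integral) (auto intro!: AE_I2 simp: AN_bounds mult.commute)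
  also have "(\<integral>x. AN' x * indicator {0..b} x \<partial>lborel) = (LINT x:{0..b}|lborel. AN' x)"
    unfolding set_lebesgue_integral_def by (simp add: mult.commute)
  finally have "ennreal (\<integral>\<omega>. R \<omega> * min (Y \<omega>) b \<partial>N) = ennreal (LINT x:{0..b}|lborel. AN' x)" .
  moreover have "0 \<le> (\<integral>\<omega>. R \<omega> * min (Y \<omega>) b \<partial>N)"
    by (intro integral_nonneg_AE AE_I2) (auto simp: bnd Y0 b)
  moreover have "0 \<le> (LINT x:{0..b}|lborel. AN' x)"
    unfolding set_lebesgue_integral_def by (intro integral_nonneg_AE AE_I2) (simp add: AN_bounds indicator_def)
  ultimately show ?thesis by simp
qed

end

context mtsetup2 begin

definition "R \<omega> = Xs i \<omega> / X \<omega>"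

lemma R_meas[measurable]: "R \<in> borel_measurable M"
  unfolding R_def by measurable

lemma R_meas_Q[measurable]: "R \<in> borel_measurable Q"
  using R_meas by (simp cong: measurable_cong_sets)

lemma X_meas_Q[measurable]: "X \<in> borel_measurable Q"
  using X_meas by (simp cong: measurable_cong_sets)

lemma R_bnd: assumes "\<omega> \<in> space M" shows "0 \<le> R \<omega> \<and> R \<omega> \<le> 1"
proof -
  have "0 \<le> Xs i \<omega>" "Xs i \<omega> \<le> X \<omega>" "0 \<le> X \<omega>" using assms Xi_nonneg Xi_le_X X_nonneg by auto
  then show ?thesis unfolding R_def by (cases "X \<omega> = 0") (auto simp: divide_le_eq_1)
qed

lemma R_bnd_Q: "\<omega> \<in> space Q \<Longrightarrow> 0 \<le> R \<omega> \<and> R \<omega> \<le> 1"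
  using R_bnd by simp

lemma eqpay_eq: "eqpay Xs n i b \<omega> = R \<omega> * min (X \<omega>) b"
  unfolding eqpay_def R_def by simp

lemma finM: "finite_measure M" by (rule finite_measure_axioms)
lemma finQ: "finite_measure Q" using Q_prob by (simp add: prob_space_def)

abbreviation "AM \<equiv> AN M R X"
abbreviation "BQ \<equiv> AN Q R X"

lemma SN_M: "SN M X x = S x"
  by (simp add: SN_def surv_def)

lemma SN_Q: "SN Q X x = g (S x)"
  using measure_Q[of x] by (simp add: SN_def)

lemma gS_cont: "isCont (\<lambda>x. g (S x)) x"
proof -
  have "range S \<subseteq> {0..1}" using S_range by auto
  then have "continuous_on UNIV (\<lambda>x. g (S x))"
    using continuous_on_compose2[OF distortion_cont[OF g] S_cont_on[of UNIV]] by auto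
  then show ?thesis by (simp add: continuous_on_eq_continuous_at)
qed

lemma AM_cont: "isCont AM x"
proof (rule AN_cont[OF finM R_meas X_meas R_bnd])
  have "SN M X = S" by (rule ext) (rule SN_M)
  then show "isCont (SN M X) x" using S_cont by simp
qed

lemma BQ_cont: "isCont BQ x"
proof (rule AN_cont[OF finQ R_meas_Q X_meas_Q R_bnd_Q])
  have "SN Q X = (\<lambda>x. g (S x))" by (rule ext) (rule SN_Q)
  then show "isCont (SN Q X) x" using gS_cont by simp
qed

lemma alpha_eq: "alpha M Xs n i x * S x = AM x"
proof -
  have a: "alpha M Xs n i x = AM x / S x"
    unfolding alpha_def cond_exp_event_def AN_def R_def surv_def by (rule refl)
  have "0 \<le> AM x" "AM x \<le> S x"
    using AN_bounds[OF finM R_meas X_meas R_bnd, of x] SN_M by auto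
  then show ?thesis using a by (cases "S x = 0") auto
qed

lemma beta_eq: "beta M gd Xs n i x * g (S x) = BQ x"
proof -
  have a: "beta M gd Xs n i x = BQ x / g (S x)"
    unfolding beta_def cond_exp_event_def AN_def R_def measure_Q[of x, symmetric] by simp
  have "0 \<le> BQ x" "BQ x \<le> g (S x)"
    using AN_bounds[OF finQ R_meas_Q X_meas_Q R_bnd_Q, of x] SN_Q by auto
  then show ?thesis using a by (cases "g (S x) = 0") auto
qed

lemma Sbar_eq: "0 \<le> b \<Longrightarrow> Sbar M Xs n i b = (LINT x:{0..b}|lborel. AM x)"
  unfolding Sbar_def eqpay_eq
  by (rule fubini_eq[OF finM R_meas X_meas R_bnd X_nonneg])
     (auto intro: continuous_at_imp_continuous_on AM_cont)

lemma Pbar_eq: "0 \<le> b \<Longrightarrow> Pbar M gd Xs n i b = (LINT x:{0..b}|lborel. BQ x)"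
  unfolding Pbar_def eqpay_eq
  by (rule fubini_eq[OF finQ R_meas_Q X_meas_Q R_bnd_Q])
     (auto intro: continuous_at_imp_continuous_on BQ_cont X_nonneg)

definition "h x = BQ x - AM x"

lemma h_cont: "continuous_on A h"
  unfolding h_def by (intro continuous_at_imp_continuous_on ballI continuous_intros AM_cont BQ_cont)

lemma h_eq: "beta M gd Xs n i x * g (S x) - alpha M Xs n i x * S x = h x"
  by (simp add: h_def alpha_eq beta_eq)

lemma h_int: "set_integrable lborel {0..b} h"
  unfolding set_integrable_def by (rule borel_integrable_compact) (auto intro: h_cont)

lemma diff_eq: "0 \<le> b \<Longrightarrow> Pbar M gd Xs n i b - Sbar M Xs n i b = (LINT x:{0..b}|lborel. h x)"
proof -
  assume b: "0 \<le> b"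
  have iA: "set_integrable lborel {0..b} AM"
    unfolding set_integrable_def by (rule borel_integrable_compact) (auto intro: continuous_at_imp_continuous_on AM_cont)
  have iB: "set_integrable lborel {0..b} BQ"
    unfolding set_integrable_def by (rule borel_integrable_compact) (auto intro: continuous_at_imp_continuous_on BQ_cont)
  show ?thesis unfolding Sbar_eq[OF b] Pbar_eq[OF b] h_def
    by (rule set_integral_diff(2)[OF iB iA, symmetric])
qed

lemma main:
  assumes a: "0 < a"
  shows "set_integrable lborel {0..a}
           (\<lambda>x. beta M gd Xs n i x * g (surv M (Xtot Xs n) x) - alpha M Xs n i x * surv M (Xtot Xs n) x)
       \<and> Pbar M gd Xs n i a - Sbar M Xs n i a =
           (LINT x:{0..a}|lborel. beta M gd Xs n i x * g (surv M (Xtot Xs n) x)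
                                  - alpha M Xs n i x * surv M (Xtot Xs n) x)
       \<and> ((\<lambda>b. Pbar M gd Xs n i b - Sbar M Xs n i b) has_real_derivative
           (beta M gd Xs n i a * g (surv M (Xtot Xs n) a) - alpha M Xs n i a * surv M (Xtot Xs n) a)) (at a)"
proof -
  have fe: "(\<lambda>x. beta M gd Xs n i x * g (surv M (Xtot Xs n) x) - alpha M Xs n i x * surv M (Xtot Xs n) x) = h"
    using h_eq by (intro ext) simp
  have d1: "((\<lambda>b. integral {0..b} h) has_real_derivative h a) (at a within {0..2*a})"
    using a by (intro integral_has_real_derivative h_cont) auto
  have "a \<in> interior {0..2*a}" using a by (simp add: interior_atLeastAtMost_real)
  then have d2: "((\<lambda>b. integral {0..b} h) has_real_derivative h a) (at a)"
    using d1 at_within_interior[of a "{0..2*a}"] by metis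
  have d3: "((\<lambda>b. Pbar M gd Xs n i b - Sbar M Xs n i b) has_real_derivative h a) (at a)"
  proof (rule has_field_derivative_transform_within_open[OF d2, where S="{0<..}"])
    fix b :: real assume "b \<in> {0<..}"
    then have "0 \<le> b" by simp
    then show "integral {0..b} h = Pbar M gd Xs n i b - Sbar M Xs n i b"
      using diff_eq set_borel_integral_eq_integral(2)[OF h_int] by simp
  qed (use a in auto)
  show ?thesis unfolding fe h_eq using h_int diff_eq[of a] a d3 by auto
qed

end

theorem mainTheorem5:
  fixes M :: "'a measure" and Xs :: "nat \<Rightarrow> 'a \<Rightarrow> real" and n i :: nat
    and g gd :: "real \<Rightarrow> real" and f :: "real \<Rightarrow> ennreal" and a :: real
  assumes "prob_space M" and "atomless M"
    and "distortion g"
    and "\<exists>C. countable C \<and> (\<forall>t\<in>{0<..<1} - C. (g has_real_derivative gd t) (at t))"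
    and "\<forall>j\<in>{1..n}. integrable M (Xs j) \<and> (\<forall>\<omega>\<in>space M. 0 \<le> Xs j \<omega>)"
    and "distributed M lborel (Xtot Xs n) f"
    and "rho M g (Xtot Xs n) < \<infinity>"
    and "i \<in> {1..n}" and "a > 0"
  shows "set_integrable lborel {0..a}
           (\<lambda>x. beta M gd Xs n i x * g (surv M (Xtot Xs n) x) - alpha M Xs n i x * surv M (Xtot Xs n) x)
       \<and> Pbar M gd Xs n i a - Sbar M Xs n i a =
           (LINT x:{0..a}|lborel. beta M gd Xs n i x * g (surv M (Xtot Xs n) x)
                                  - alpha M Xs n i x * surv M (Xtot Xs n) x)
       \<and> ((\<lambda>b. Pbar M gd Xs n i b - Sbar M Xs n i b) has_real_derivative
           (beta M gd Xs n i a * g (surv M (Xtot Xs n) a) - alpha M Xs n i a * surv M (Xtot Xs n) a)) (at a)"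
proof -
  obtain C where C: "countable C" "\<forall>t\<in>{0<..<1} - C. (g has_real_derivative gd t) (at t)"
    using assms(4) by blast
  have ms: "mtsetup M Xs n i f"
    by (rule mtsetup.intro[OF assms(1)], rule mtsetup_axioms.intro[OF assms(5) assms(6) assms(8)])
  have "mtsetup2 M Xs n i f g gd C"
    by (rule mtsetup2.intro[OF ms], rule mtsetup2_axioms.intro[OF assms(3) C(1) C(2)])
  then interpret mtsetup2 M Xs n i f g gd C .
  show ?thesis by (rule main[OF assms(9)])
qed

end
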